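(* Let $m \ge 1$ and let $\tilde S : [0,1] \to M_m$ be a continuous map with $\tilde S(0) = \tilde S(1)$. Suppose $\det \tilde S(\tau) \neq 0$ for all $\tau \in [0,1]$, and let $\operatorname{wn}(\tilde S) \in \mathbb{Z}$ be the winding number about the origin of the closed curve $\tau \mapsto \det \tilde S(\tau)$ in $\mathbb{C}\setminus\{0\}$. If $m$ does not divide $\operatorname{wn}(\tilde S)$, then there exists $\tau_0 \in [0,1]$ such that $0 \in W(\tilde S(\tau_0))$.
   Context: $M_m$ denotes the set of complex $m\times m$ matrices. For $A \in M_m$, the numerical range is $W(A) = \{x^\dagger A x : x \in \mathbb{C}^m,\ x^\dagger x = 1\}$. The winding number is $\operatorname{wn}(\tilde S) = \varphi(1) - \varphi(0)$, where $2\pi\varphi(\tau)$ is a continuous choice of the polar angle of $\det\tilde S(\tau)$. *)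

theory Defs
  imports "HOL-Analysis.Analysis"
begin

definition numerical_range :: "complex^'m^'m \<Rightarrow> complex set" where
  "numerical_range A =
     {(\<Sum>i\<in>UNIV. cnj (x $ i) * (A *v x) $ i) | x :: complex^'m.
        (\<Sum>i\<in>UNIV. cnj (x $ i) * x $ i) = 1}"

definition angle_lift :: "(real \<Rightarrow> complex) \<Rightarrow> (real \<Rightarrow> real) \<Rightarrow> bool" where
  "angle_lift g \<phi> \<longleftrightarrow> continuous_on {0..1} \<phi> \<and>
     (\<forall>\<tau>\<in>{0..1}. g \<tau> = complex_of_real (cmod (g \<tau>)) * exp (2 * pi * \<i> * complex_of_real (\<phi> \<tau>)))"

text \<open>Winding number of the determinant curve: phi(1) - phi(0) for a continuous lift phi
  (independent of the chosen lift).\<close>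
definition wn :: "(real \<Rightarrow> complex^'m^'m) \<Rightarrow> real" where
  "wn S = (THE w. \<exists>\<phi>. angle_lift (\<lambda>\<tau>. det (S \<tau>)) \<phi> \<and> w = \<phi> 1 - \<phi> 0)"

end

theory Submission
  imports Defs "HOL-Complex_Analysis.Complex_Analysis"
begin


definition qf :: "complex^'m^'m \<Rightarrow> complex^'m \<Rightarrow> complex^'m \<Rightarrow> complex" where
  "qf A u v = (\<Sum>i\<in>UNIV. cnj (u $ i) * (A *v v) $ i)"

definition nr :: "complex^'m \<Rightarrow> complex" where
  "nr u = (\<Sum>i\<in>UNIV. cnj (u $ i) * u $ i)"

lemma qf_add_left: "qf A (u + v) w = qf A u w + qf A v w"
  by (simp add: qf_def sum.distrib algebra_simps)
lemma qf_add_right: "qf A w (u + v) = qf A w u + qf A w v"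
  by (simp add: qf_def matrix_vector_right_distrib sum.distrib algebra_simps)
lemma qf_scale_left: "qf A (c *s u) w = cnj c * qf A u w"
  by (simp add: qf_def sum_distrib_left algebra_simps)
lemma qf_scale_right: "qf A w (c *s u) = c * qf A w u"
  by (simp add: qf_def matrix_vector_mult_def sum_distrib_left algebra_simps)

lemma qf_neg: "qf A (-u) (-u) = qf A u u"
  by (simp add: qf_def matrix_vector_mult_def sum_negf)

lemma two_point:
  fixes A :: "complex^'m^'m"
  assumes a0: "qf A x x \<noteq> 0" and rpos: "r > 0" and b: "qf A y y = - of_real r * qf A x x"
  shows "\<exists>z. z \<noteq> 0 \<and> qf A z z = 0"
proof -
  define a where "a = qf A x x"
  define p where "p = qf A x y"
  define q where "q = qf A y x"
  define d where "d = cnj a * p - a * cnj q"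
  define \<omega> where "\<omega> = (if d = 0 then 1 else cnj d / of_real (cmod d))"
  have om1: "cnj \<omega> * \<omega> = 1"
  proof (cases "d = 0")
    case False
    have "cnj \<omega> * \<omega> = (d * cnj d) / (of_real (cmod d))^2"
      using False by (simp add: \<omega>_def power2_eq_square)
    also have "\<dots> = 1" using False by (simp add: complex_norm_square[symmetric])
    finally show ?thesis .
  qed (simp add: \<omega>_def)
  have omd: "Im (\<omega> * d) = 0"
    unfolding \<omega>_def by (auto simp: complex_mult_cnj)
  define K where "K = \<omega> * cnj a * p + cnj \<omega> * cnj a * q"
  have ImK: "Im K = 0"
  proof -
    have "Im K = Im (\<omega> * cnj a * p) + Im (cnj \<omega> * cnj a * q)" by (simp add: K_def)
    also have "Im (cnj \<omega> * cnj a * q) = - Im (\<omega> * a * cnj q)"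
    proof -
      have "cnj \<omega> * cnj a * q = cnj (\<omega> * a * cnj q)" by simp
      then show ?thesis by (simp add: algebra_simps)
    qed
    finally show ?thesis using omd by (simp add: d_def algebra_simps)
  qed
  define z where "z s = of_real (1 - s) *s x + (of_real s * \<omega>) *s y" for s :: real
  have exp: "qf A (z s) (z s) = of_real ((1-s)^2) * a + of_real (s * (1-s)) * (\<omega> * p + cnj \<omega> * q)
              + of_real (s^2) * qf A y y" for s
    using om1
    apply (simp only: z_def qf_add_left qf_add_right qf_scale_left qf_scale_right)
    by (simp add: qf_add_left qf_add_right qf_scale_left qf_scale_right a_def p_def q_def
        algebra_simps power2_eq_square)
  define f where "f s = (1-s)^2 * (cmod a)^2 + s * (1-s) * Re K - s^2 * r * (cmod a)^2" for s
  have fz: "cnj a * qf A (z s) (z s) = of_real (f s)" for s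
  proof -
    have "cnj a * qf A (z s) (z s) = of_real ((1-s)^2) * (cnj a * a) + of_real (s * (1-s)) * K
            - of_real (s^2 * r) * (cnj a * a)"
      unfolding exp b a_def[symmetric] K_def by (simp add: algebra_simps)
    also have "\<dots> = of_real (f s)"
      using ImK cmod_power2[of a] by (simp add: f_def complex_mult_cnj complex_eq_iff power2_eq_square)
    finally show ?thesis .
  qed
  have cont: "continuous_on {0..1} f" unfolding f_def by (intro continuous_intros)
  have "f 1 \<le> 0" using rpos by (simp add: f_def)
  moreover have "0 \<le> f 0" by (simp add: f_def)
  ultimately obtain s where s: "0 \<le> s" "s \<le> 1" "f s = 0"
    using IVT2'[of f 1 0 0, OF _ _ _ cont] by auto
  have "s \<noteq> 1" using s rpos a0 by (auto simp: f_def a_def)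
  have qz: "qf A (z s) (z s) = 0" using fz[of s] s a0 by (simp add: a_def)
  have "z s \<noteq> 0"
  proof
    assume z0: "z s = 0"
    then have "of_real (1 - s) *s x = - ((of_real s * \<omega>) *s y)" unfolding z_def
      by (simp add: add_eq_0_iff)
    then have "qf A (of_real (1 - s) *s x) (of_real (1 - s) *s x) = qf A ((of_real s * \<omega>) *s y) ((of_real s * \<omega>) *s y)"
      by (simp add: qf_neg)
    then have "of_real ((1-s)^2) * a = of_real (s^2) * qf A y y"
      using om1 unfolding qf_scale_left qf_scale_right
      by (simp add: a_def power2_eq_square algebra_simps)
    then have "of_real ((1-s)^2) * a = - of_real (s^2 * r) * a" by (simp add: b a_def)
    then have "(1-s)^2 = - (s^2 * r)" using a0 a_def
      by (metis mult_cancel_right of_real_eq_iff of_real_minus)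
    moreover have "(1-s)^2 > 0" using \<open>s \<noteq> 1\<close> by simp
    moreover have "s^2 * r \<ge> 0" using rpos by simp
    ultimately show False by linarith
  qed
  with qz show ?thesis by blast
qed

lemma W_mem: "nr y = 1 \<Longrightarrow> qf A y y \<in> numerical_range A"
  unfolding numerical_range_def qf_def nr_def by blast

lemma nr_norm: "nr x = of_real ((norm x)^2)"
proof -
  have "nr x = (\<Sum>i\<in>UNIV. of_real ((cmod (x $ i))^2))"
    unfolding nr_def by (intro sum.cong refl) (metis complex_norm_square mult.commute of_real_power)
  also have "\<dots> = of_real ((norm x)^2)"
    by (simp add: norm_vec_def L2_set_def sum_nonneg flip: of_real_power of_real_sum)
  finally show ?thesis .
qed

lemma normalize:
  fixes x :: "complex^'m"
  assumes "x \<noteq> 0"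
  shows "\<exists>y. nr y = 1 \<and> qf A y y = qf A x x / nr x"
proof -
  define c where "c = complex_of_real (1 / norm x)"
  have n0: "norm x \<noteq> 0" using assms by simp
  have cc: "cnj c * c = 1 / nr x"
    using n0 by (simp add: c_def nr_norm power2_eq_square)
  have "nr (c *s x) = cnj c * c * nr x"
    unfolding nr_def by (simp add: sum_distrib_left algebra_simps)
  also have "\<dots> = 1" using cc n0 by (simp add: nr_norm)
  finally have "nr (c *s x) = 1" .
  moreover have "qf A (c *s x) (c *s x) = qf A x x / nr x"
  proof -
    have "qf A (c *s x) (c *s x) = (cnj c * c) * qf A x x"
      by (simp add: qf_scale_left qf_scale_right algebra_simps)
    then show ?thesis using cc by simp
  qed
  ultimately show ?thesis by blast
qed

lemma nonsing:
  fixes A :: "complex^'m^'m"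
  assumes W: "0 \<notin> numerical_range A" and t: "0 \<le> t" "t \<le> 1" and e: "nr e = 1"
  shows "det (\<chi> i j. of_real (1-t) * A$i$j + (if i = j then of_real t * qf A e e else 0)) \<noteq> 0"
    (is "det ?B \<noteq> 0")
proof
  assume "det ?B = 0"
  then have "\<not> invertible ?B" using invertible_det_nz by blast
  then obtain x where x: "x \<noteq> 0" "?B *v x = 0"
    using matrix_left_invertible_ker[of ?B] invertible_left_inverse[of ?B] by blast
  define c where "c = qf A e e"
  have Bx: "?B *v x = of_real (1-t) *s (A *v x) + (of_real t * c) *s x"
  proof -
    have d: "(\<Sum>j\<in>UNIV. (if i = j then k else 0) * x $ j) = k * x $ i" for i and k :: complex
    proof -
      have "(\<Sum>j\<in>UNIV. (if i = j then k else 0) * x $ j) = (\<Sum>j\<in>UNIV. if i = j then k * x $ j else 0)"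
        by (intro sum.cong) auto
      then show ?thesis by simp
    qed
    show ?thesis
      by (simp add: vec_eq_iff matrix_vector_mult_def distrib_right sum.distrib d c_def mult.assoc left_diff_distrib sum_subtractf flip: sum_distrib_left)
  qed
  have "(\<Sum>i\<in>UNIV. cnj (x$i) * (?B *v x)$i) = of_real (1-t) * qf A x x + of_real t * c * nr x"
    unfolding Bx by (simp add: qf_def nr_def sum.distrib sum_distrib_left distrib_left mult.left_commute left_diff_distrib)
  then have eq0: "of_real (1-t) * qf A x x + of_real t * c * nr x = 0"
    using x by simp
  obtain y where y: "nr y = 1" "qf A y y = qf A x x / nr x" using normalize[OF x(1)] by blast
  have nx: "nr x \<noteq> 0" using x(1) by (simp add: nr_norm)
  define a where "a = qf A x x / nr x"
  have eq: "of_real (1-t) * a + of_real t * c = 0"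
    using eq0 nx by (simp add: a_def field_simps)
  have a0: "a \<noteq> 0" using W W_mem[OF y(1), of A] y(2) a_def by auto
  have c0: "c \<noteq> 0" using W W_mem[OF e, of A] c_def by auto
  have "t \<noteq> 0" using eq a0 by auto
  have "t \<noteq> 1" using eq c0 by auto
  have tp: "t > 0" "1 - t > 0" using t \<open>t \<noteq> 0\<close> \<open>t \<noteq> 1\<close> by auto
  have "c = - of_real ((1-t)/t) * a"
    using eq tp by (simp add: field_simps)
  then obtain z where "z \<noteq> 0" "qf A z z = 0"
    using two_point[of A y "(1-t)/t" e] a0 tp y(2) a_def c_def by auto
  then obtain w where "nr w = 1" "qf A w w = 0" using normalize[of z A] by auto
  then show False using W W_mem[of w A] by simp
qed



lemma continuous_on_det:
  fixes f :: "'a::topological_space \<Rightarrow> complex^'n^'n"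
  assumes "\<And>i j. continuous_on X (\<lambda>p. f p $ i $ j)"
  shows "continuous_on X (\<lambda>p. det (f p))"
  unfolding det_def by (intro continuous_intros assms)

lemma lift_unique:
  assumes phi: "angle_lift g \<phi>" and psi: "angle_lift g \<psi>" and nz: "\<forall>\<tau>\<in>{0..1}. g \<tau> \<noteq> 0"
  shows "\<phi> 1 - \<phi> 0 = \<psi> 1 - \<psi> 0"
proof -
  define h where "h \<tau> = \<phi> \<tau> - \<psi> \<tau>" for \<tau>
  have int: "h \<tau> \<in> \<int>" if \<tau>: "\<tau> \<in> {0..1}" for \<tau>
  proof -
    have g1: "g \<tau> = complex_of_real (cmod (g \<tau>)) * exp (2 * pi * \<i> * complex_of_real (\<phi> \<tau>))"
      using phi \<tau> unfolding angle_lift_def by blast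
    have g2: "g \<tau> = complex_of_real (cmod (g \<tau>)) * exp (2 * pi * \<i> * complex_of_real (\<psi> \<tau>))"
      using psi \<tau> unfolding angle_lift_def by blast
    have "cmod (g \<tau>) \<noteq> 0" using nz \<tau> by auto
    then have "exp (2 * pi * \<i> * complex_of_real (\<phi> \<tau>)) = exp (2 * pi * \<i> * complex_of_real (\<psi> \<tau>))"
      using g1 g2 by (metis mult_cancel_left of_real_eq_0_iff)
    then have "exp (2 * pi * \<i> * complex_of_real (\<phi> \<tau>) - 2 * pi * \<i> * complex_of_real (\<psi> \<tau>)) = 1"
      by (simp add: exp_diff)
    then obtain n :: int where "Im (2 * pi * \<i> * complex_of_real (\<phi> \<tau>) - 2 * pi * \<i> * complex_of_real (\<psi> \<tau>)) = of_int (2 * n) * pi"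
      unfolding exp_eq_1 by blast
    then have "2 * pi * (\<phi> \<tau> - \<psi> \<tau>) = 2 * pi * of_int n" by (simp add: algebra_simps)
    then have "h \<tau> = of_int n" unfolding h_def by simp
    then show ?thesis by simp
  qed
  have "h constant_on {0..1}"
  proof (rule continuous_discrete_range_constant)
    show "connected {0..1::real}" by simp
    show "continuous_on {0..1} h"
      using phi psi unfolding angle_lift_def h_def by (intro continuous_intros) auto
    fix x assume x: "x \<in> {0..1::real}"
    show "\<exists>e>0. \<forall>y. y \<in> {0..1} \<and> h y \<noteq> h x \<longrightarrow> e \<le> norm (h y - h x)"
    proof (intro exI[of _ 1] conjI allI impI)
      fix y assume y: "y \<in> {0..1} \<and> h y \<noteq> h x"
      obtain a where a: "h x = of_int a" using int x Ints_cases by metis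
      obtain b where b: "h y = of_int b" using int y Ints_cases by metis
      have "a \<noteq> b" using a b y by auto
      then have "1 \<le> \<bar>b - a\<bar>" by linarith
      then show "1 \<le> norm (h y - h x)" using a b by (simp flip: of_int_diff)
    qed simp
  qed
  then have "h 1 = h 0" unfolding constant_on_def by force
  then show ?thesis unfolding h_def by simp
qed

lemma lift_exists:
  assumes "path g" "0 \<notin> path_image g"
  shows "\<exists>\<phi>. angle_lift g \<phi> \<and> \<phi> 1 - \<phi> 0 = Re (winding_number g 0)"
proof -
  obtain q where q: "path q" "pathfinish q - pathstart q = 2 * of_real pi * \<i> * winding_number g 0"
    "\<And>t. t \<in> {0..1} \<Longrightarrow> g t = 0 + exp (q t)"
    using winding_number_as_continuous_log[OF assms] by blast
  define \<phi> where "\<phi> t = Im (q t) / (2 * pi)" for t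
  have "angle_lift g \<phi>"
    unfolding angle_lift_def
  proof (intro conjI ballI)
    show "continuous_on {0..1} \<phi>" using q(1) unfolding path_def \<phi>_def by (intro continuous_intros) auto
    fix t :: real assume t: "t \<in> {0..1}"
    have h1: "2 * pi * \<i> * complex_of_real (\<phi> t) = \<i> * complex_of_real (Im (q t))"
      by (simp add: \<phi>_def)
    have e1: "exp (\<i> * of_real (Im (q t))) = exp (2 * pi * \<i> * of_real (\<phi> t))"
      by (simp only: h1)
    have g: "g t = exp (q t)" using q(3)[OF t] by simp
    have e2: "exp (q t) = of_real (exp (Re (q t))) * exp (\<i> * of_real (Im (q t)))"
      by (subst exp_eq_polar) (simp add: cis_conv_exp)
    have cm: "cmod (g t) = exp (Re (q t))" using g by (simp add: norm_exp_eq_Re)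
    show "g t = complex_of_real (cmod (g t)) * exp (2 * pi * \<i> * complex_of_real (\<phi> t))"
      by (metis g e1 e2 cm)
  qed
  moreover have "\<phi> 1 - \<phi> 0 = Re (winding_number g 0)"
  proof -
    have "Im (q 1 - q 0) = 2 * pi * Re (winding_number g 0)"
      using q(2) by (simp add: pathfinish_def pathstart_def)
    then show ?thesis by (simp add: \<phi>_def diff_divide_distrib[symmetric])
  qed
  ultimately show ?thesis by blast
qed

lemma wn_eq:
  fixes S :: "real \<Rightarrow> complex^'m^'m"
  assumes "path (\<lambda>\<tau>. det (S \<tau>))" "0 \<notin> path_image (\<lambda>\<tau>. det (S \<tau>))"
  shows "wn S = Re (winding_number (\<lambda>\<tau>. det (S \<tau>)) 0)"
proof -
  obtain \<phi> where phi: "angle_lift (\<lambda>\<tau>. det (S \<tau>)) \<phi>"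
    "\<phi> 1 - \<phi> 0 = Re (winding_number (\<lambda>\<tau>. det (S \<tau>)) 0)"
    using lift_exists[OF assms] by blast
  have nz: "\<forall>\<tau>\<in>{0..1}. det (S \<tau>) \<noteq> 0" using assms(2) by (auto simp: path_image_def)
  show ?thesis unfolding wn_def
  proof (rule the_equality)
    show "\<exists>\<psi>. angle_lift (\<lambda>\<tau>. det (S \<tau>)) \<psi> \<and> Re (winding_number (\<lambda>\<tau>. det (S \<tau>)) 0) = \<psi> 1 - \<psi> 0"
      using phi by metis
    fix w assume "\<exists>\<psi>. angle_lift (\<lambda>\<tau>. det (S \<tau>)) \<psi> \<and> w = \<psi> 1 - \<psi> 0"
    then obtain \<psi> where "angle_lift (\<lambda>\<tau>. det (S \<tau>)) \<psi>" "w = \<psi> 1 - \<psi> 0" by blast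
    then show "w = Re (winding_number (\<lambda>\<tau>. det (S \<tau>)) 0)"
      using lift_unique[OF _ phi(1) nz] phi(2) by metis
  qed
qed

lemma lift_pow:
  assumes "angle_lift c \<phi>"
  shows "angle_lift (\<lambda>\<tau>. c \<tau> ^ n) (\<lambda>\<tau>. of_nat n * \<phi> \<tau>)"
  unfolding angle_lift_def
proof (intro conjI ballI)
  show "continuous_on {0..1} (\<lambda>\<tau>. real n * \<phi> \<tau>)"
    using assms unfolding angle_lift_def by (intro continuous_intros) auto
  fix t :: real assume t: "t \<in> {0..1}"
  have c: "c t = complex_of_real (cmod (c t)) * exp (2 * pi * \<i> * complex_of_real (\<phi> t))"
    using assms t unfolding angle_lift_def by blast
  have "c t ^ n = complex_of_real (cmod (c t)) ^ n * exp (2 * pi * \<i> * complex_of_real (\<phi> t)) ^ n"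
    by (subst c) (simp add: power_mult_distrib)
  also have "exp (2 * pi * \<i> * complex_of_real (\<phi> t)) ^ n = exp (of_nat n * (2 * pi * \<i> * complex_of_real (\<phi> t)))"
    by (simp add: exp_of_nat_mult)
  also have "of_nat n * (2 * pi * \<i> * complex_of_real (\<phi> t)) = 2 * pi * \<i> * complex_of_real (real n * \<phi> t)"
    by simp
  finally have eq: "c t ^ n = complex_of_real (cmod (c t)) ^ n * exp (2 * pi * \<i> * complex_of_real (real n * \<phi> t))" .
  have nn: "complex_of_real (cmod (c t ^ n)) = complex_of_real (cmod (c t)) ^ n" by (simp add: norm_power)
  show "c t ^ n = complex_of_real (cmod (c t ^ n)) * exp (2 * pi * \<i> * complex_of_real (real n * \<phi> t))"
    using eq nn by metis
qed



theorem mainTheorem1: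
  fixes S :: "real \<Rightarrow> complex^'m^'m"
  assumes "continuous_on {0..1} S"
    and "S 0 = S 1"
    and "\<forall>\<tau>\<in>{0..1}. det (S \<tau>) \<noteq> 0"
    and "\<not> (\<exists>k::int. wn S = real_of_int (int CARD('m) * k))"
  shows "\<exists>\<tau>0\<in>{0..1}. 0 \<in> numerical_range (S \<tau>0)"
proof (rule ccontr)
  assume "\<not> (\<exists>\<tau>0\<in>{0..1}. 0 \<in> numerical_range (S \<tau>0))"
  then have W: "\<And>\<tau>. \<tau> \<in> {0..1} \<Longrightarrow> 0 \<notin> numerical_range (S \<tau>)" by blast
  define e :: "complex^'m" where "e = axis undefined 1"
  have e1: "nr e = 1" unfolding nr_def e_def axis_def
    by (simp add: if_distrib if_distribR cong: if_cong)
  define c where "c \<tau> = qf (S \<tau>) e e" for \<tau>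
  have Scomp: "continuous_on X (\<lambda>p. S (snd p) $ i $ j)" if "snd ` X \<subseteq> {0..1}" for X :: "(real \<times> real) set" and i j
    by (intro continuous_on_component continuous_on_compose2[OF assms(1)] continuous_intros that)
  have ccont: "continuous_on X (\<lambda>p. c (snd p))" if "snd ` X \<subseteq> {0..1}" for X :: "(real \<times> real) set"
    unfolding c_def qf_def matrix_vector_mult_def
    by (simp, intro continuous_intros Scomp that)
  define H where "H p = det (\<chi> i j. of_real (1 - fst p) * S (snd p) $ i $ j
      + (if i = j then of_real (fst p) * c (snd p) else 0))" for p :: "real \<times> real"
  define m where "m = CARD('m)"
  have hom: "homotopic_loops (-{0}) (\<lambda>\<tau>. det (S \<tau>)) (\<lambda>\<tau>. c \<tau> ^ m)"
    unfolding homotopic_loops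
  proof (intro exI[of _ H] conjI ballI)
    have sub: "snd ` ({0..1::real} \<times> {0..1::real}) \<subseteq> {0..1}" by auto
    show "continuous_on ({0..1} \<times> {0..1}) H"
      unfolding H_def
    proof (rule continuous_on_det)
      fix i j :: 'm
      show "continuous_on ({0..1} \<times> {0..1}) (\<lambda>p. (\<chi> i j. of_real (1 - fst p) * S (snd p) $ i $ j
          + (if i = j then of_real (fst p) * c (snd p) else 0)) $ i $ j)"
        by (cases "i = j") (simp_all, (intro continuous_intros Scomp ccont sub)+)
    qed
    show "H \<in> {0..1} \<times> {0..1} \<rightarrow> - {0}"
    proof
      fix p :: "real \<times> real" assume "p \<in> {0..1} \<times> {0..1}"
      then show "H p \<in> - {0}"
        using nonsing[OF W[of "snd p"] _ _ e1, of "fst p"] unfolding H_def c_def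
        by (auto simp: mem_Times_iff)
    qed
    fix x :: real
    show "H (0, x) = det (S x)" unfolding H_def fst_conv snd_conv of_real_0 mult_zero_left if_cancel add_0_right by simp
    show "H (1, x) = c x ^ m" unfolding H_def m_def
      by (subst det_diagonal) (simp_all add: prod_constant)
  next
    fix t :: real
    show "pathfinish (H \<circ> Pair t) = pathstart (H \<circ> Pair t)"
      unfolding pathfinish_def pathstart_def H_def o_def fst_conv snd_conv c_def assms(2) by simp
  qed
  have wneq: "winding_number (\<lambda>\<tau>. det (S \<tau>)) 0 = winding_number (\<lambda>\<tau>. c \<tau> ^ m) 0"
    by (rule winding_number_homotopic_loops[OF hom])
  have pd: "path (\<lambda>\<tau>. det (S \<tau>))" "path (\<lambda>\<tau>. c \<tau> ^ m)"
    using homotopic_loops_imp_path[OF hom] by auto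
  have id: "0 \<notin> path_image (\<lambda>\<tau>. det (S \<tau>))" "0 \<notin> path_image (\<lambda>\<tau>. c \<tau> ^ m)"
    using homotopic_loops_imp_subset[OF hom] by auto
  have pc: "path c"
  proof -
    have "continuous_on ((\<lambda>\<tau>. (0::real, \<tau>)) ` {0..1}) (\<lambda>p. c (snd p))"
      by (rule ccont) auto
    then have "continuous_on {0..1} ((\<lambda>p. c (snd p)) \<circ> (\<lambda>\<tau>. (0::real, \<tau>)))"
      by (intro continuous_on_compose continuous_intros)
    then show ?thesis by (simp add: path_def o_def)
  qed
  have ic: "0 \<notin> path_image c"
  proof
    assume "0 \<in> path_image c"
    then obtain \<tau> where t: "\<tau> \<in> {0..1}" "qf (S \<tau>) e e = 0" unfolding path_image_def c_def by auto
    then show False using W[OF t(1)] W_mem[OF e1, of "S \<tau>"] by simp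
  qed
  have lc: "pathfinish c = pathstart c"
    by (simp add: pathfinish_def pathstart_def c_def assms(2))
  obtain \<phi> where phi: "angle_lift c \<phi>" "\<phi> 1 - \<phi> 0 = Re (winding_number c 0)"
    using lift_exists[OF pc ic] by blast
  obtain k :: int where k: "winding_number c 0 = of_int k"
    using integer_winding_number[OF pc lc ic] Ints_cases by metis
  obtain \<psi> where psi: "angle_lift (\<lambda>\<tau>. c \<tau> ^ m) \<psi>" "\<psi> 1 - \<psi> 0 = Re (winding_number (\<lambda>\<tau>. c \<tau> ^ m) 0)"
    using lift_exists[OF pd(2) id(2)] by blast
  have nz: "\<forall>\<tau>\<in>{0..1}. c \<tau> ^ m \<noteq> 0" using id(2) by (auto simp: path_image_def)
  have "(of_nat m * \<phi> 1) - (of_nat m * \<phi> 0) = \<psi> 1 - \<psi> 0"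
    using lift_unique[OF lift_pow[OF phi(1), of m] psi(1) nz] .
  then have "wn S = of_nat m * (\<phi> 1 - \<phi> 0)"
    using wn_eq[OF pd(1) id(1)] wneq psi(2) by (simp add: right_diff_distrib)
  then have "wn S = of_nat m * of_int k" using phi(2) k by simp
  then show False using assms(4) unfolding m_def by (metis of_int_mult of_int_of_nat_eq)
qed

end
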